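(* Under the hypotheses of the previous setting (nonzero $\mathsf k_1,\mathsf k_2,\mathsf k_3$, a Bethe solution with pairwise distinct roots $\lambda_l\ne\lambda_m$, $\mu_p\ne\mu_q$, $\mu_q\ne\lambda_m$ and $\{\mu_h\}\cap\{\xi_n\}=\emptyset$), let $t_1(\lambda)=t_1(\lambda|\{\lambda_j\},\{\mu_h\})$, $x_a=t_1(\xi_a)$, and let $t^{(m)}_n(\lambda)=t^{(m)}_n(\lambda|\{x_a\})$ be the associated fused polynomials. Then the null out-boundary conditions $t^{(2+n)}_{3+m}(\lambda)=0$ hold for all $\lambda\in\mathbb C$ and all integers $n,m\ge0$, and the inner-boundary condition $\mathsf k_2\mathsf k_3\,d(\lambda)\,t_3(\lambda)=\mathsf k_1\,t^{(2)}_2(\lambda+\eta)$ holds for all $\lambda\in\mathbb C$; equivalently $\mathsf k_2\mathsf k_3d(\lambda)t_3(\lambda)=\mathsf k_1\big(t_2(\lambda)t_2(\lambda+\eta)-t_3(\lambda)t_1(\lambda+\eta)\big)$.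
   Context: Fix a nonzero complex number $\eta$, an integer $\mathsf N\ge1$ and complex inhomogeneities $\xi_1,\dots,\xi_{\mathsf N}$ with $\xi_a-\xi_b\notin\eta\mathbb Z$ for $a\ne b$. This concerns the fundamental $gl_{1|2}$ model with diagonal twist $K=\operatorname{diag}(\mathsf k_1,\mathsf k_2,\mathsf k_3)$. Write $d(\lambda)=\prod_{n=1}^{\mathsf N}(\lambda-\xi_n)$, $a(\lambda)=d(\lambda+\eta)$, and $f^{(m)}_a(\lambda)=\prod_{b\ne a}\frac{\lambda-\xi_b}{\xi_a-\xi_b}\prod_{b=1}^{\mathsf N}\prod_{r=1}^{m-1}\frac{1}{\xi_a-\xi_b+r\eta}$. Let $T_{\infty,1}=\mathsf k_1-\mathsf k_2-\mathsf k_3$ and $T_{\infty,n}=\mathsf k_1^{n-2}(\mathsf k_1-\mathsf k_2)(\mathsf k_1-\mathsf k_3)$ for $n\ge2$. Interpolation polynomials in unknowns $\{x_a\}$: $t_1(\lambda|\{x_a\})=T_{\infty,1}d(\lambda)+\sum_af^{(1)}_a(\lambda)x_a$ and, for $n\ge1$, $t_{n+1}(\lambda|\{x_a\})=\prod_{r=1}^nd(\lambda+r\eta)\big[T_{\infty,n+1}d(\lambda)+\sum_af^{(n+1)}_a(\lambda)t_n(\xi_a+\eta|\{x_a\})x_a\big]$. Fused polynomials: $t^{(m)}_n(\lambda|\{x_a\})=\det_{1\le i,j\le m}t_{n+i-j}(\lambda-(i-1)\eta|\{x_a\})$ with $t_0\equiv1$, $t_k\equiv0$ for $k<0$. Bethe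 Ansatz: $Q_1(\lambda)=\prod_{l=1}^L(\lambda-\lambda_l)$, $Q_2(\lambda)=\prod_{m=1}^M(\lambda-\mu_m)$; Bethe equations: $\mathsf k_1Q_2(\lambda_j)a(\lambda_j)=\mathsf k_2d(\lambda_j)Q_2(\lambda_j+\eta)$ ($j\le L$) and $\mathsf k_2Q_2(\mu_j+\eta)Q_1(\mu_j-\eta)=-\mathsf k_3Q_2(\mu_j-\eta)Q_1(\mu_j)$ ($j\le M$). Define $\Lambda_1(\lambda)=\mathsf k_1a(\lambda)\frac{Q_1(\lambda-\eta)}{Q_1(\lambda)}$, $\Lambda_2(\lambda)=\mathsf k_2d(\lambda)\frac{Q_1(\lambda-\eta)Q_2(\lambda+\eta)}{Q_1(\lambda)Q_2(\lambda)}$, $\Lambda_3(\lambda)=\mathsf k_3d(\lambda)\frac{Q_2(\lambda-\eta)}{Q_2(\lambda)}$, and $t_1(\lambda|\{\lambda_j\},\{\mu_h\})=\Lambda_1(\lambda)-\Lambda_2(\lambda)-\Lambda_3(\lambda)$. *)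

theory Defs
  imports Complex_Main "Jordan_Normal_Form.Determinant"
begin

text \<open>Inhomogeneities are xi 1, ..., xi N. Bethe roots are lam 1..lam L and mu 1..mu M.\<close>

definition dfun :: "(nat \<Rightarrow> complex) \<Rightarrow> nat \<Rightarrow> complex \<Rightarrow> complex" where
  "dfun xi N z = (\<Prod>n=1..N. (z - xi n))"

definition afun :: "complex \<Rightarrow> (nat \<Rightarrow> complex) \<Rightarrow> nat \<Rightarrow> complex \<Rightarrow> complex" where
  "afun eta xi N z = dfun xi N (z + eta)"

definition fcoef :: "complex \<Rightarrow> (nat \<Rightarrow> complex) \<Rightarrow> nat \<Rightarrow> nat \<Rightarrow> nat \<Rightarrow> complex \<Rightarrow> complex" where
  "fcoef eta xi N m a z =
     (\<Prod>b\<in>{1..N} - {a}. (z - xi b) / (xi a - xi b)) *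
     (\<Prod>b=1..N. \<Prod>r=1..m-1. 1 / (xi a - xi b + of_nat r * eta))"

definition Tinf :: "complex \<Rightarrow> complex \<Rightarrow> complex \<Rightarrow> nat \<Rightarrow> complex" where
  "Tinf k1 k2 k3 n = (if n = 1 then k1 - k2 - k3 else k1 ^ (n - 2) * (k1 - k2) * (k1 - k3))"

fun tpol :: "complex \<Rightarrow> (nat \<Rightarrow> complex) \<Rightarrow> nat \<Rightarrow> complex \<Rightarrow> complex \<Rightarrow> complex
              \<Rightarrow> (nat \<Rightarrow> complex) \<Rightarrow> nat \<Rightarrow> complex \<Rightarrow> complex" where
  "tpol eta xi N k1 k2 k3 x 0 z = 1"
| "tpol eta xi N k1 k2 k3 x (Suc 0) z =
     Tinf k1 k2 k3 1 * dfun xi N z + (\<Sum>a=1..N. fcoef eta xi N 1 a z * x a)"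
| "tpol eta xi N k1 k2 k3 x (Suc (Suc n)) z =
     (\<Prod>r=1..Suc n. dfun xi N (z + of_nat r * eta)) *
     (Tinf k1 k2 k3 (Suc (Suc n)) * dfun xi N z +
      (\<Sum>a=1..N. fcoef eta xi N (Suc (Suc n)) a z * tpol eta xi N k1 k2 k3 x (Suc n) (xi a + eta) * x a))"

definition tZ :: "complex \<Rightarrow> (nat \<Rightarrow> complex) \<Rightarrow> nat \<Rightarrow> complex \<Rightarrow> complex \<Rightarrow> complex
              \<Rightarrow> (nat \<Rightarrow> complex) \<Rightarrow> int \<Rightarrow> complex \<Rightarrow> complex" where
  "tZ eta xi N k1 k2 k3 x k z = (if k < 0 then 0 else tpol eta xi N k1 k2 k3 x (nat k) z)"

text \<open>Fused polynomials t^(m)_n(z) = det_{1<=i,j<=m} t_{n+i-j}(z-(i-1) eta) (0-based indices here).\<close>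
definition tfused :: "complex \<Rightarrow> (nat \<Rightarrow> complex) \<Rightarrow> nat \<Rightarrow> complex \<Rightarrow> complex \<Rightarrow> complex
              \<Rightarrow> (nat \<Rightarrow> complex) \<Rightarrow> nat \<Rightarrow> nat \<Rightarrow> complex \<Rightarrow> complex" where
  "tfused eta xi N k1 k2 k3 x m n z =
     det (mat m m (\<lambda>(i, j). tZ eta xi N k1 k2 k3 x (int n + int i - int j) (z - of_nat i * eta)))"

definition Qpol :: "(nat \<Rightarrow> complex) \<Rightarrow> nat \<Rightarrow> complex \<Rightarrow> complex" where
  "Qpol r K z = (\<Prod>l=1..K. (z - r l))"

definition tBethe :: "complex \<Rightarrow> (nat \<Rightarrow> complex) \<Rightarrow> nat \<Rightarrow> complex \<Rightarrow> complex \<Rightarrow> complex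
     \<Rightarrow> (nat \<Rightarrow> complex) \<Rightarrow> nat \<Rightarrow> (nat \<Rightarrow> complex) \<Rightarrow> nat \<Rightarrow> complex \<Rightarrow> complex" where
  "tBethe eta xi N k1 k2 k3 lam L mu M z =
     k1 * afun eta xi N z * Qpol lam L (z - eta) / Qpol lam L z
   - k2 * dfun xi N z * Qpol lam L (z - eta) * Qpol mu M (z + eta) / (Qpol lam L z * Qpol mu M z)
   - k3 * dfun xi N z * Qpol mu M (z - eta) / Qpol mu M z"

end

theory Submission
  imports Defs "HOL-Computational_Algebra.Polynomial"
begin




definition shp :: "complex poly \<Rightarrow> complex \<Rightarrow> complex poly" where
  "shp p c = p \<circ>\<^sub>p [:c,1:]"

lemma poly_shp[simp]: "poly (shp p c) z = poly p (z + c)"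
  by (simp add: shp_def poly_pcompose add.commute)

lemma degree_shp[simp]: "degree (shp p c) = degree p"
  by (simp add: shp_def degree_pcompose)

lemma lead_shp[simp]: "lead_coeff (shp p c) = lead_coeff p"
  by (simp add: shp_def lead_coeff_comp)

lemma coeff_le: assumes "degree p \<le> n" shows "coeff p n = (if degree p = n then lead_coeff p else 0)"
  using assms by (cases "degree p = n") (simp_all add: coeff_eq_0)

lemma coeff_shp: assumes "degree p \<le> n" shows "coeff (shp p c) n = coeff p n"
proof -
  have "coeff (shp p c) n = (if degree (shp p c) = n then lead_coeff (shp p c) else 0)"
    by (rule coeff_le) (simp add: assms)
  also have "\<dots> = (if degree p = n then lead_coeff p else 0)" by (metis degree_shp lead_shp)
  also have "\<dots> = coeff p n" by (rule coeff_le[symmetric, OF assms])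
  finally show ?thesis .
qed

lemma coeff_mult_le:
  fixes p q :: "complex poly"
  assumes "degree p \<le> m" "degree q \<le> n"
  shows "coeff (p*q) (m+n) = coeff p m * coeff q n"
proof (cases "degree p = m \<and> degree q = n")
  case True thus ?thesis using coeff_mult_degree_sum[of p q] by simp
next
  case False
  hence "degree p < m \<or> degree q < n" using assms by auto
  hence r: "coeff p m * coeff q n = 0" by (auto simp: coeff_eq_0)
  have "degree (p*q) < m + n" using False assms degree_mult_le[of p q] by linarith
  thus ?thesis using r by (simp add: coeff_eq_0)
qed

definition lp :: "(nat \<Rightarrow> complex) \<Rightarrow> nat set \<Rightarrow> complex poly" where
  "lp r A = (\<Prod>a\<in>A. [:- r a, 1:])"

lemma poly_lp: "poly (lp r A) z = (\<Prod>a\<in>A. (z - r a))"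
  by (simp add: lp_def poly_prod)

lemma lp_nz: "lp r A \<noteq> 0"
  unfolding lp_def by (cases "finite A") (auto simp: prod_zero_iff)

lemma degree_lp: "finite A \<Longrightarrow> degree (lp r A) = card A"
  unfolding lp_def by (subst degree_prod_eq_sum_degree) auto

lemma lead_lp: "lead_coeff (lp r A) = 1"
  unfolding lp_def by (simp add: lead_coeff_prod)

lemma lp_dvd:
  assumes "finite A" "inj_on r A" "\<forall>a\<in>A. poly p (r a) = 0"
  shows "lp r A dvd p"
  using assms
proof (induction A arbitrary: p rule: finite_induct)
  case empty thus ?case by (simp add: lp_def)
next
  case (insert a A p)
  have ra: "poly p (r a) = 0" using insert.prems by auto
  obtain q where q: "p = [:- r a, 1:] * q" using ra unfolding poly_eq_0_iff_dvd by (elim dvdE)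
  have injA: "inj_on r A" and ne: "r a \<notin> r ` A" using insert.prems(1) insert.hyps(2) by auto
  have "\<forall>b\<in>A. poly q (r b) = 0"
  proof
    fix b assume b: "b \<in> A"
    have "r b \<noteq> r a" using ne b by (metis image_eqI)
    moreover have "poly p (r b) = 0" using insert.prems(2) b by auto
    ultimately show "poly q (r b) = 0" using q by simp
  qed
  hence "lp r A dvd q" using insert.IH injA by blast
  hence "[:- r a, 1:] * lp r A dvd p" unfolding q by (rule mult_dvd_mono[OF dvd_refl])
  thus ?case using insert.hyps by (simp add: lp_def)
qed

lemma roots_zero:
  fixes h :: "complex poly"
  assumes "finite S" "\<forall>s\<in>S. poly h s = 0" "degree h < card S"
  shows "h = 0"
proof (rule ccontr)
  assume h: "h \<noteq> 0"
  have "card S \<le> card {x. poly h x = 0}"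
    using assms by (intro card_mono poly_roots_finite h) auto
  also have "\<dots> \<le> degree h" by (rule card_poly_roots_bound[OF h])
  finally show False using assms by simp
qed

lemma dfun_lp: "dfun xi N z = poly (lp xi {1..N}) z"
  by (simp add: dfun_def poly_lp)

lemma Qpol_lp: "Qpol r K z = poly (lp r {1..K}) z"
  by (simp add: Qpol_def poly_lp)

definition Lg :: "(nat \<Rightarrow> complex) \<Rightarrow> nat \<Rightarrow> nat \<Rightarrow> complex poly" where
  "Lg xi N a = (\<Prod>b\<in>{1..N} - {a}. smult (1 / (xi a - xi b)) [:- xi b, 1:])"

lemma poly_Lg: "poly (Lg xi N a) z = (\<Prod>b\<in>{1..N} - {a}. (z - xi b) / (xi a - xi b))"
  unfolding Lg_def poly_prod by (rule prod.cong) (simp_all add: divide_inverse algebra_simps)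

lemma degree_Lg: assumes a: "a \<in> {1..N}" shows "degree (Lg xi N a) \<le> N - 1"
proof -
  have "degree (Lg xi N a) \<le> sum (degree \<circ> (\<lambda>b. smult (1 / (xi a - xi b)) [:- xi b, 1:])) ({1..N} - {a})"
    unfolding Lg_def by (rule degree_prod_sum_le) auto
  also have "\<dots> \<le> sum (\<lambda>_. 1) ({1..N} - {a})"
    by (rule sum_mono) auto
  also have "\<dots> \<le> N - 1" using a by auto
  finally show ?thesis .
qed

lemma fcoef1: "fcoef eta xi N 1 a z = poly (Lg xi N a) z"
  by (simp add: fcoef_def poly_Lg)

lemma fcoef1': "fcoef eta xi N (Suc 0) a z = poly (Lg xi N a) z"
  using fcoef1 by simp

lemma poly_Lg_node:
  assumes inj: "inj_on xi {1..N}" and a: "a \<in> {1..N}" and c: "c \<in> {1..N}"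
  shows "poly (Lg xi N a) (xi c) = (if c = a then 1 else 0)"
proof (cases "c = a")
  case True
  have "\<forall>b\<in>{1..N} - {a}. xi a - xi b \<noteq> 0" using inj a by (auto dest: inj_onD)
  thus ?thesis using True by (simp add: poly_Lg)
next
  case False
  have "\<exists>b\<in>{1..N} - {a}. xi c - xi b = 0" using c False by (intro bexI[of _ c]) auto
  hence "(\<Prod>b\<in>{1..N} - {a}. (xi c - xi b) / (xi a - xi b)) = 0"
    by (intro prod_zero) auto
  thus ?thesis using False by (simp add: poly_Lg)
qed

lemma lagrange:
  fixes g :: "complex poly"
  assumes inj: "inj_on xi {1..N}" and N: "N \<ge> 1" and dg: "degree g \<le> N"
  shows "poly g z = coeff g N * dfun xi N z + (\<Sum>a=1..N. fcoef eta xi N 1 a z * poly g (xi a))"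
proof -
  define h where "h = g - smult (coeff g N) (lp xi {1..N}) - (\<Sum>a\<in>{1..N}. smult (poly g (xi a)) (Lg xi N a))"
  have dL: "\<And>a. a \<in> {1..N} \<Longrightarrow> degree (smult (poly g (xi a)) (Lg xi N a)) \<le> N - 1"
    using degree_Lg degree_smult_le order_trans by blast
  have ds: "degree (\<Sum>a\<in>{1..N}. smult (poly g (xi a)) (Lg xi N a)) \<le> N - 1"
    by (rule degree_sum_le) (use dL in auto)
  have dlp: "degree (lp xi {1..N}) = N" by (simp add: degree_lp)
  have dh: "degree h \<le> N" unfolding h_def
    using dg ds dlp N
    by (intro degree_diff_le) (auto intro: degree_diff_le order_trans[OF degree_smult_le])
  have "coeff (\<Sum>a\<in>{1..N}. smult (poly g (xi a)) (Lg xi N a)) N = 0"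
    using ds N by (intro coeff_eq_0) auto
  moreover have "coeff (lp xi {1..N}) N = 1" using dlp lead_lp[of xi "{1..N}"] by simp
  ultimately have ch: "coeff h N = 0" unfolding h_def by simp
  have dh2: "degree h < N"
  proof (rule ccontr)
    assume "\<not> degree h < N"
    hence "degree h = N" using dh by simp
    hence "h = 0" using ch by (metis leading_coeff_0_iff)
    thus False using \<open>degree h = N\<close> N by simp
  qed
  have roots: "\<forall>s\<in>xi ` {1..N}. poly h s = 0"
  proof
    fix s assume "s \<in> xi ` {1..N}"
    then obtain c where c: "c \<in> {1..N}" "s = xi c" by auto
    have "(\<Sum>a\<in>{1..N}. poly g (xi a) * poly (Lg xi N a) (xi c)) = poly g (xi c)"
      using c by (simp add: poly_Lg_node[OF inj _ c(1)] if_distrib cong: if_cong)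
    moreover have "(\<Prod>a\<in>{1..N}. (xi c - xi a)) = 0" using c by (intro prod_zero) auto
    ultimately show "poly h s = 0" using c unfolding h_def
      by (simp add: poly_sum poly_lp)
  qed
  have "card (xi ` {1..N}) = N" using inj by (simp add: card_image)
  hence "h = 0" using roots_zero[OF _ roots] dh2 by simp
  hence "g = smult (coeff g N) (lp xi {1..N}) + (\<Sum>a\<in>{1..N}. smult (poly g (xi a)) (Lg xi N a))"
    unfolding h_def by (simp add: diff_eq_eq add.commute)
  hence "poly g z = poly (smult (coeff g N) (lp xi {1..N}) + (\<Sum>a\<in>{1..N}. smult (poly g (xi a)) (Lg xi N a))) z"
    by (rule arg_cong)
  also have "\<dots> = coeff g N * poly (lp xi {1..N}) z + (\<Sum>a\<in>{1..N}. poly g (xi a) * poly (Lg xi N a) z)"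
    by (simp add: poly_sum)
  also have "\<dots> = coeff g N * dfun xi N z + (\<Sum>a=1..N. fcoef eta xi N 1 a z * poly g (xi a))"
    by (simp add: fcoef1' dfun_lp mult.commute)
  finally show ?thesis .
qed





lemma det22: "det (mat 2 2 f) = f (0,0) * f (1,1) - f (0,1) * (f (1,0) :: complex)"
proof -
  have "det (mat 2 2 f) = (\<Sum>j<2. mat 2 2 f $$ (0,j) * cofactor (mat 2 2 f) 0 j)"
    by (rule laplace_expansion_row) auto
  also have "\<dots> = f(0,0)*f(1,1) - f(0,1)*f(1,0)"
    by (simp add: cofactor_def mat_delete_def det_single numeral_2_eq_2)
  finally show ?thesis .
qed

lemma det_cols_dep:
  fixes A :: "complex mat"
  assumes A: "A \<in> carrier_mat n n" and n: "1 < n"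
    and dep: "\<forall>i<n. A $$ (i,0) * al = A $$ (i,1) * be"
    and z: "al = 0 \<longrightarrow> (\<forall>i<n. A $$ (i,1) = 0)"
  shows "det A = 0"
proof (cases "al = 0")
  case True
  have "A *\<^sub>v unit_vec n 1 = 0\<^sub>v n"
  proof (rule eq_vecI)
    fix i assume i: "i < dim_vec (0\<^sub>v n :: complex vec)"
    have "(A *\<^sub>v unit_vec n 1) $ i = row A i \<bullet> unit_vec n 1" using A i by simp
    also have "\<dots> = A $$ (i,1)" using A i n by (simp add: scalar_prod_def unit_vec_def if_distrib cong: if_cong)
    also have "\<dots> = 0" using z True i by simp
    finally show "(A *\<^sub>v unit_vec n 1) $ i = 0\<^sub>v n $ i" using i by simp
  qed (use A in simp)
  moreover have "unit_vec n 1 \<noteq> (0\<^sub>v n :: complex vec)"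
  proof
    assume "unit_vec n 1 = (0\<^sub>v n :: complex vec)"
    hence "unit_vec n 1 $ 1 = (0\<^sub>v n :: complex vec) $ 1" by simp
    thus False using n by simp
  qed
  moreover have "unit_vec n 1 \<in> carrier_vec n" by simp
  ultimately show ?thesis using det_0_iff_vec_prod_zero[OF A] by blast
next
  case False
  define v where "v = vec n (\<lambda>j. if j = 0 then al else if j = 1 then - be else (0::complex))"
  have "A *\<^sub>v v = 0\<^sub>v n"
  proof (rule eq_vecI)
    fix i assume i: "i < dim_vec (0\<^sub>v n :: complex vec)"
    have "(A *\<^sub>v v) $ i = (\<Sum>j\<in>{0..<n}. A $$ (i,j) * v $ j)"
      using A i by (simp add: scalar_prod_def v_def)
    also have "\<dots> = (\<Sum>j\<in>{0..<n}. (if j = 0 then A $$ (i,0) * al else 0) + (if j = 1 then - (A $$ (i,1) * be) else 0))"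
      by (rule sum.cong) (auto simp: v_def)
    also have "\<dots> = A $$ (i,0) * al - A $$ (i,1) * be"
      using n by (simp add: sum.distrib)
    also have "\<dots> = 0" using dep i by simp
    finally show "(A *\<^sub>v v) $ i = 0\<^sub>v n $ i" using i by simp
  qed (use A in simp)
  moreover have "v \<noteq> 0\<^sub>v n"
  proof
    assume "v = 0\<^sub>v n"
    hence "v $ 0 = 0\<^sub>v n $ 0" by simp
    thus False using n False by (simp add: v_def)
  qed
  moreover have "v \<in> carrier_vec n" by (simp add: v_def)
  ultimately show ?thesis using det_0_iff_vec_prod_zero[OF A] by blast
qed



lemma coeff3:
  fixes A B C :: "complex poly"
  assumes "degree A \<le> a" "degree B \<le> b" "degree C \<le> c"
  shows "coeff (A*B*C) (a+b+c) = coeff A a * coeff B b * coeff C c"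
    and "degree (A*B*C) \<le> a+b+c"
proof -
  have dAB: "degree (A*B) \<le> a+b" using assms degree_mult_le[of A B] by linarith
  show "coeff (A*B*C) (a+b+c) = coeff A a * coeff B b * coeff C c"
    using coeff_mult_le[OF dAB assms(3)] coeff_mult_le[OF assms(1,2)] by simp
  show "degree (A*B*C) \<le> a+b+c" using dAB assms(3) degree_mult_le[of "A*B" C] by linarith
qed

lemma deg_lt:
  fixes h :: "complex poly"
  assumes "degree h \<le> K" "coeff h K = 0" "K \<ge> 1"
  shows "degree h < K"
proof (rule ccontr)
  assume "\<not> degree h < K"
  hence "degree h = K" using assms by simp
  hence "h = 0" using assms(2) by (metis leading_coeff_0_iff)
  thus False using \<open>degree h = K\<close> assms(3) by simp
qed

locale BA =
  fixes eta k1 k2 k3 :: complex and N L M :: nat and xi lam mu x :: "nat \<Rightarrow> complex"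
  assumes eta: "eta \<noteq> 0" and N: "N \<ge> 1"
    and xi: "\<And>a b. a \<in> {1..N} \<Longrightarrow> b \<in> {1..N} \<Longrightarrow> a \<noteq> b \<Longrightarrow> \<forall>k::int. xi a - xi b \<noteq> of_int k * eta"
    and k1: "k1 \<noteq> 0" and k2: "k2 \<noteq> 0" and k3: "k3 \<noteq> 0"
    and BE1: "\<And>j. j \<in> {1..L} \<Longrightarrow>
       k1 * Qpol mu M (lam j) * afun eta xi N (lam j) = k2 * dfun xi N (lam j) * Qpol mu M (lam j + eta)"
    and BE2: "\<And>j. j \<in> {1..M} \<Longrightarrow>
       k2 * Qpol mu M (mu j + eta) * Qpol lam L (mu j - eta) = - k3 * Qpol mu M (mu j - eta) * Qpol lam L (mu j)"
    and dl: "\<And>l m. l \<in> {1..L} \<Longrightarrow> m \<in> {1..L} \<Longrightarrow> l \<noteq> m \<Longrightarrow> lam l \<noteq> lam m"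
    and dm: "\<And>p q. p \<in> {1..M} \<Longrightarrow> q \<in> {1..M} \<Longrightarrow> p \<noteq> q \<Longrightarrow> mu p \<noteq> mu q"
    and dlm: "\<And>q m. q \<in> {1..M} \<Longrightarrow> m \<in> {1..L} \<Longrightarrow> mu q \<noteq> lam m"
    and dmx: "\<And>h n. h \<in> {1..M} \<Longrightarrow> n \<in> {1..N} \<Longrightarrow> mu h \<noteq> xi n"
    and x_def: "x = (\<lambda>a. tBethe eta xi N k1 k2 k3 lam L mu M (xi a))"
begin

abbreviation "dN \<equiv> dfun xi N"
abbreviation "Q1 \<equiv> Qpol lam L"
abbreviation "Q2 \<equiv> Qpol mu M"
abbreviation "tt \<equiv> tpol eta xi N k1 k2 k3 x"

definition "dP = lp xi {1..N}"
definition "Q1P = lp lam {1..L}"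
definition "Q2P = lp mu {1..M}"

lemma poly_dP[simp]: "poly dP z = dN z" by (simp add: dP_def dfun_lp)
lemma poly_Q1P[simp]: "poly Q1P z = Q1 z" by (simp add: Q1P_def Qpol_lp)
lemma poly_Q2P[simp]: "poly Q2P z = Q2 z" by (simp add: Q2P_def Qpol_lp)
lemma deg_dP[simp]: "degree dP = N" by (simp add: dP_def degree_lp)
lemma deg_Q1P[simp]: "degree Q1P = L" by (simp add: Q1P_def degree_lp)
lemma deg_Q2P[simp]: "degree Q2P = M" by (simp add: Q2P_def degree_lp)
lemma lead_dP[simp]: "lead_coeff dP = 1" by (simp add: dP_def lead_lp)
lemma lead_Q1P[simp]: "lead_coeff Q1P = 1" by (simp add: Q1P_def lead_lp)
lemma lead_Q2P[simp]: "lead_coeff Q2P = 1" by (simp add: Q2P_def lead_lp)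
lemma Q1P_nz[simp]: "Q1P \<noteq> 0" by (simp add: Q1P_def lp_nz)

lemma inj_xi: "inj_on xi {1..N}"
proof (rule inj_onI)
  fix a b assume ab: "a \<in> {1..N}" "b \<in> {1..N}" "xi a = xi b"
  show "a = b"
  proof (rule ccontr)
    assume "a \<noteq> b"
    hence "xi a - xi b \<noteq> of_int 0 * eta" using xi[OF ab(1,2)] by blast
    thus False using ab(3) by simp
  qed
qed

lemma inj_lam: "inj_on lam {1..L}"
  by (rule inj_onI) (metis dl)

lemma inj_mu: "inj_on mu {1..M}"
  by (rule inj_onI) (metis dm)

lemma d_shift_nz:
  assumes a: "a \<in> {1..N}" and r: "r \<ge> 1"
  shows "dN (xi a + of_nat r * eta) \<noteq> 0"
proof -
  have "xi a + of_nat r * eta - xi b \<noteq> 0" if b: "b \<in> {1..N}" for b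
  proof
    assume h: "xi a + of_nat r * eta - xi b = 0"
    show False
    proof (cases "a = b")
      case True thus False using h r eta by simp
    next
      case False
      have "xi a - xi b = - (of_nat r * eta)" using h by (simp add: algebra_simps)
      hence "xi a - xi b = of_int (- int r) * eta" by simp
      thus False using xi[OF a b False] by blast
    qed
  qed
  thus ?thesis by (simp add: dfun_def)
qed

lemma d_xi: "a \<in> {1..N} \<Longrightarrow> dN (xi a) = 0"
  unfolding dfun_def by (rule prod_zero) auto

lemma Q1_lam: "j \<in> {1..L} \<Longrightarrow> Q1 (lam j) = 0"
  unfolding Qpol_def by (rule prod_zero) auto

lemma Q2_mu: "j \<in> {1..M} \<Longrightarrow> Q2 (mu j) = 0"
  unfolding Qpol_def by (rule prod_zero) auto

lemma Q2_lam_nz: assumes j: "j \<in> {1..L}" shows "Q2 (lam j) \<noteq> 0"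
proof -
  have "\<forall>h\<in>{1..M}. lam j - mu h \<noteq> 0" using dlm j by force
  thus ?thesis unfolding Qpol_def by simp
qed

lemma Q2_xi_nz: assumes a: "a \<in> {1..N}" shows "Q2 (xi a) \<noteq> 0"
proof -
  have "\<forall>h\<in>{1..M}. xi a - mu h \<noteq> 0" using dmx a by force
  thus ?thesis unfolding Qpol_def by simp
qed

lemma d_zero_iff: "dN z = 0 \<longleftrightarrow> (\<exists>n\<in>{1..N}. z = xi n)"
  by (simp add: dfun_def)

lemma lam_ne_xi:
  assumes j: "j \<in> {1..L}" and a: "a \<in> {1..N}"
  shows "lam j \<noteq> xi a"
proof
  assume h: "lam j = xi a"
  have "k1 * Q2 (lam j) * afun eta xi N (lam j) = 0"
    using BE1[OF j] h d_xi[OF a] by simp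
  hence "dN (xi a + of_nat 1 * eta) = 0"
    using k1 Q2_lam_nz[OF j] h by (simp add: afun_def)
  thus False using d_shift_nz[OF a, of 1] by simp
qed

lemma Q1_xi_nz: assumes a: "a \<in> {1..N}" shows "Q1 (xi a) \<noteq> 0"
proof -
  have "\<forall>h\<in>{1..L}. xi a - lam h \<noteq> 0" using lam_ne_xi a by force
  thus ?thesis unfolding Qpol_def by simp
qed

lemma x_val: "a \<in> {1..N} \<Longrightarrow> x a * Q1 (xi a) = k1 * dN (xi a + eta) * Q1 (xi a - eta)"
  using Q1_xi_nz[of a] d_xi[of a] by (simp add: x_def tBethe_def afun_def)

lemma Q2_lam_eta_nz:
  assumes j: "j \<in> {1..L}" shows "Q2 (lam j + eta) \<noteq> 0"
proof
  assume h: "Q2 (lam j + eta) = 0"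
  then obtain hh where hh: "hh \<in> {1..M}" "lam j + eta = mu hh" by (auto simp: Qpol_def)
  have "k1 * Q2 (lam j) * afun eta xi N (lam j) = 0" using BE1[OF j] h by simp
  hence "dN (lam j + eta) = 0" using k1 Q2_lam_nz[OF j] by (simp add: afun_def)
  then obtain n where "n \<in> {1..N}" "lam j + eta = xi n" by (auto simp: d_zero_iff)
  thus False using dmx[OF hh(1)] hh(2) by metis
qed

definition "Pp = smult (Tinf k1 k2 k3 1) dP + (\<Sum>a\<in>{1..N}. smult (x a) (Lg xi N a))"

lemma poly_Pp: "poly Pp z = tt (Suc 0) z"
  by (simp add: Pp_def poly_sum fcoef1' mult.commute)

lemma deg_Pp: "degree Pp \<le> N"
proof -
  have "degree (\<Sum>a\<in>{1..N}. smult (x a) (Lg xi N a)) \<le> N"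
    by (rule degree_sum_le) (auto intro: order_trans[OF degree_smult_le] order_trans[OF degree_Lg])
  thus ?thesis unfolding Pp_def
    by (intro degree_add_le) (auto intro: order_trans[OF degree_smult_le])
qed

lemma coeff_Pp: "coeff Pp N = k1 - k2 - k3"
proof -
  have "degree (\<Sum>a\<in>{1..N}. smult (x a) (Lg xi N a)) \<le> N - 1"
    by (rule degree_sum_le) (auto intro: order_trans[OF degree_smult_le] order_trans[OF degree_Lg])
  hence "coeff (\<Sum>a\<in>{1..N}. smult (x a) (Lg xi N a)) N = 0" using N by (intro coeff_eq_0) auto
  moreover have "coeff dP N = 1" using lead_dP deg_dP by metis
  ultimately show ?thesis by (simp add: Pp_def Tinf_def)
qed

lemma t1_xi: "a \<in> {1..N} \<Longrightarrow> tt (Suc 0) (xi a) = x a"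
proof -
  assume a: "a \<in> {1..N}"
  have "poly Pp (xi a) = (\<Sum>b\<in>{1..N}. x b * poly (Lg xi N b) (xi a))"
    using d_xi[OF a] by (simp add: Pp_def poly_sum)
  also have "\<dots> = x a" using a by (simp add: poly_Lg_node[OF inj_xi _ a] if_distrib cong: if_cong)
  finally show ?thesis using poly_Pp by simp
qed

end



context BA
begin

lemma coeff_dP[simp]: "coeff dP N = 1" by (metis lead_dP deg_dP)
lemma coeff_Q1P[simp]: "coeff Q1P L = 1" by (metis lead_Q1P deg_Q1P)
lemma coeff_Q2P[simp]: "coeff Q2P M = 1" by (metis lead_Q2P deg_Q2P)

definition "numP = smult k1 (shp dP eta * shp Q1P (-eta) * Q2P)
   - smult k2 (dP * shp Q1P (-eta) * shp Q2P eta) - smult k3 (dP * Q1P * shp Q2P (-eta))"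

lemma poly_numP: "poly numP z = k1 * (dN (z+eta) * Q1 (z - eta) * Q2 z)
   - k2 * (dN z * Q1 (z - eta) * Q2 (z + eta)) - k3 * (dN z * Q1 z * Q2 (z - eta))"
  by (simp add: numP_def)

lemma NUM: "numP = Pp * Q1P * Q2P"
proof -
  define h where "h = numP - Pp * Q1P * Q2P"
  have c1: "coeff (shp dP eta * shp Q1P (-eta) * Q2P) (N+L+M) = 1"
   and d1: "degree (shp dP eta * shp Q1P (-eta) * Q2P) \<le> N+L+M"
    using coeff3[of "shp dP eta" N "shp Q1P (-eta)" L Q2P M] by (simp_all add: coeff_shp)
  have c2: "coeff (dP * shp Q1P (-eta) * shp Q2P eta) (N+L+M) = 1"
   and d2: "degree (dP * shp Q1P (-eta) * shp Q2P eta) \<le> N+L+M"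
    using coeff3[of dP N "shp Q1P (-eta)" L "shp Q2P eta" M] by (simp_all add: coeff_shp)
  have c3: "coeff (dP * Q1P * shp Q2P (-eta)) (N+L+M) = 1"
   and d3: "degree (dP * Q1P * shp Q2P (-eta)) \<le> N+L+M"
    using coeff3[of dP N Q1P L "shp Q2P (-eta)" M] by (simp_all add: coeff_shp)
  have c4: "coeff (Pp * Q1P * Q2P) (N+L+M) = k1 - k2 - k3"
   and d4: "degree (Pp * Q1P * Q2P) \<le> N+L+M"
    using coeff3[of Pp N Q1P L Q2P M] deg_Pp by (simp_all add: coeff_Pp)
  have dn: "degree numP \<le> N+L+M" unfolding numP_def
    using d1 d2 d3 by (intro degree_diff_le) (auto intro: order_trans[OF degree_smult_le])
  have dh: "degree h \<le> N+L+M" unfolding h_def using dn d4 by (rule degree_diff_le)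
  have ch: "coeff h (N+L+M) = 0" unfolding h_def numP_def using c1 c2 c3 c4 by simp
  have dh2: "degree h < N+L+M" using deg_lt[OF dh ch] N by simp
  define S where "S = xi ` {1..N} \<union> lam ` {1..L} \<union> mu ` {1..M}"
  have dis1: "xi ` {1..N} \<inter> lam ` {1..L} = {}" using lam_ne_xi by force
  have dis2: "(xi ` {1..N} \<union> lam ` {1..L}) \<inter> mu ` {1..M} = {}" using dmx dlm by force
  have cS: "card S = N + L + M" unfolding S_def
    using dis1 dis2 inj_xi inj_lam inj_mu
    by (simp add: card_Un_disjoint card_image)
  have roots: "\<forall>s\<in>S. poly h s = 0"
  proof
    fix s assume "s \<in> S"
    then consider (X) a where "a \<in> {1..N}" "s = xi a" | (Lm) j where "j \<in> {1..L}" "s = lam j"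
      | (Mu) j where "j \<in> {1..M}" "s = mu j" unfolding S_def by blast
    thus "poly h s = 0"
    proof cases
      case X
      have "poly numP s = k1 * (dN (xi a + eta) * Q1 (xi a - eta) * Q2 (xi a))"
        using X d_xi[OF X(1)] by (simp add: poly_numP)
      also have "\<dots> = x a * Q1 (xi a) * Q2 (xi a)" using x_val[OF X(1)] by simp
      also have "\<dots> = poly (Pp * Q1P * Q2P) s" using X t1_xi[OF X(1)] by (simp add: poly_Pp)
      finally show ?thesis by (simp add: h_def)
    next
      case Lm
      have "k1 * Q2 (lam j) * dN (lam j + eta) = k2 * dN (lam j) * Q2 (lam j + eta)"
        using BE1[OF Lm(1)] by (simp add: afun_def)
      hence "poly numP s = 0" using Lm Q1_lam[OF Lm(1)]
        by (simp add: poly_numP algebra_simps)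
      moreover have "poly (Pp * Q1P * Q2P) s = 0" using Lm Q1_lam[OF Lm(1)] by simp
      ultimately show ?thesis by (simp add: h_def)
    next
      case Mu
      have "poly numP s = - dN (mu j) * (k2 * Q2 (mu j + eta) * Q1 (mu j - eta) + k3 * Q2 (mu j - eta) * Q1 (mu j))"
        using Mu Q2_mu[OF Mu(1)] by (simp add: poly_numP algebra_simps)
      also have "\<dots> = 0" using BE2[OF Mu(1)] by simp
      finally have "poly numP s = 0" .
      moreover have "poly (Pp * Q1P * Q2P) s = 0" using Mu Q2_mu[OF Mu(1)] by simp
      ultimately show ?thesis by (simp add: h_def)
    qed
  qed
  have "h = 0" using roots_zero[of S h] roots cS dh2 unfolding S_def by simp
  thus ?thesis by (simp add: h_def)
qed

lemma NUMpt: "tt (Suc 0) z * Q1 z * Q2 z = k1 * (dN (z+eta) * Q1 (z - eta) * Q2 z)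
   - k2 * (dN z * Q1 (z - eta) * Q2 (z + eta)) - k3 * (dN z * Q1 z * Q2 (z - eta))"
proof -
  have "poly (Pp * Q1P * Q2P) z = poly numP z" using NUM by simp
  thus ?thesis by (simp add: poly_numP poly_Pp)
qed

lemma Xroot:
  assumes j: "j \<in> {1..L}"
  shows "Q2 (lam j + eta) * tt (Suc 0) (lam j + eta) + k3 * dN (lam j + eta) * Q2 (lam j) = 0"
proof -
  define Yp where "Yp = smult k1 (shp dP eta * Q2P) - smult k2 (dP * shp Q2P eta)"
  define Xp where "Xp = Q2P * Pp + smult k3 (dP * shp Q2P (-eta))"
  have "\<forall>i\<in>{1..L}. poly Yp (lam i) = 0"
  proof
    fix i assume i: "i \<in> {1..L}"
    show "poly Yp (lam i) = 0"
      using BE1[OF i] by (simp add: Yp_def afun_def algebra_simps)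
  qed
  hence "Q1P dvd Yp" unfolding Q1P_def by (intro lp_dvd inj_lam) auto
  then obtain Zp where Z: "Yp = Q1P * Zp" by (elim dvdE)
  have "poly (Q1P * Xp) z = poly (shp Q1P (-eta) * Yp) z" for z
  proof -
    have e: "tt (Suc 0) z * Q1 z * Q2 z = k1 * (dN (z+eta) * Q1 (z - eta) * Q2 z)
      - k2 * (dN z * Q1 (z - eta) * Q2 (z + eta)) - k3 * (dN z * Q1 z * Q2 (z - eta))" by (rule NUMpt)
    have "poly (Q1P * Xp) z = tt (Suc 0) z * Q1 z * Q2 z + k3 * (dN z * Q1 z * Q2 (z - eta))"
      by (simp add: Xp_def poly_Pp algebra_simps)
    also have "\<dots> = k1 * (dN (z+eta) * Q1 (z - eta) * Q2 z) - k2 * (dN z * Q1 (z - eta) * Q2 (z + eta))"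
      using e by simp
    also have "\<dots> = poly (shp Q1P (-eta) * Yp) z" by (simp add: Yp_def algebra_simps)
    finally show ?thesis .
  qed
  hence "Q1P * Xp = shp Q1P (-eta) * Yp" by (simp add: poly_eq_poly_eq_iff[symmetric] fun_eq_iff)
  also have "\<dots> = Q1P * (shp Q1P (-eta) * Zp)" using Z by (simp add: ac_simps)
  finally have "Xp = shp Q1P (-eta) * Zp" by simp
  hence "poly Xp (lam j + eta) = Q1 (lam j) * poly Zp (lam j + eta)" by simp
  also have "\<dots> = 0" using Q1_lam[OF j] by simp
  finally show ?thesis by (simp add: Xp_def poly_Pp algebra_simps)
qed

lemma E_root:
  assumes j: "j \<in> {1..L}"
  shows "k1 * tt (Suc 0) (lam j + eta) + k2 * k3 * dN (lam j) = 0"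
proof -
  have b: "k1 * Q2 (lam j) * dN (lam j + eta) = k2 * dN (lam j) * Q2 (lam j + eta)"
    using BE1[OF j] by (simp add: afun_def)
  have x: "Q2 (lam j + eta) * tt (Suc 0) (lam j + eta) = - (k3 * dN (lam j + eta) * Q2 (lam j))"
    using Xroot[OF j] by (simp add: eq_neg_iff_add_eq_0)
  have "Q2 (lam j + eta) * (k1 * tt (Suc 0) (lam j + eta) + k2 * k3 * dN (lam j))
      = k1 * (Q2 (lam j + eta) * tt (Suc 0) (lam j + eta)) + k3 * (k2 * dN (lam j) * Q2 (lam j + eta))"
    by (simp add: algebra_simps)
  also have "\<dots> = - k3 * (k1 * Q2 (lam j) * dN (lam j + eta)) + k3 * (k2 * dN (lam j) * Q2 (lam j + eta))"
    unfolding x by (simp add: algebra_simps)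
  also have "\<dots> = 0" unfolding b by simp
  finally show ?thesis using Q2_lam_eta_nz[OF j] by simp
qed

definition "Ep = smult k1 (shp Pp eta) + smult (k2 * k3) dP"

lemma poly_Ep: "poly Ep w = k1 * tt (Suc 0) (w + eta) + k2 * k3 * dN w"
  by (simp add: Ep_def poly_Pp)

lemma Ep_dvd: "Q1P dvd Ep"
proof -
  have "poly Ep (lam i) = 0" if "i \<in> {1..L}" for i
    unfolding poly_Ep by (rule E_root[OF that])
  thus ?thesis unfolding Q1P_def by (intro lp_dvd inj_lam) auto
qed

definition "Fp = (SOME F. Ep = Q1P * F)"

lemma Ep_eq: "Ep = Q1P * Fp"
proof -
  obtain F where "Ep = Q1P * F" using Ep_dvd by (elim dvdE)
  thus ?thesis unfolding Fp_def by (rule someI)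
qed

lemma deg_Ep: "degree Ep \<le> N"
  unfolding Ep_def using deg_Pp
  by (intro degree_add_le) (auto intro: order_trans[OF degree_smult_le])

lemma coeff_Ep: "coeff Ep N = (k1 - k2) * (k1 - k3)"
  using deg_Pp by (simp add: Ep_def coeff_shp coeff_Pp algebra_simps)

end



lemma shp_zero_iff[simp]: "shp p c = 0 \<longleftrightarrow> p = 0"
  by (metis lead_shp leading_coeff_0_iff)

lemma shp_0[simp]: "shp 0 c = 0" by (simp add: shp_def)

lemma SH:
  fixes p q :: "complex poly"
  shows "degree (shp p a * shp q b) = degree (p*q)"
    and "lead_coeff (shp p a * shp q b) = lead_coeff (p*q)"
proof -
  show "degree (shp p a * shp q b) = degree (p*q)"
  proof (cases "p = 0 \<or> q = 0")
    case True thus ?thesis by auto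
  next
    case False thus ?thesis by (simp add: degree_mult_eq)
  qed
  show "lead_coeff (shp p a * shp q b) = lead_coeff (p*q)"
    by (metis lead_coeff_mult lead_shp)
qed

context BA
begin

definition "Sp n = smult (k1 ^ n) (shp Q1P (-eta) * shp Fp (of_nat n * eta))"

lemma poly_Sp: "poly (Sp n) z = k1 ^ n * (Q1 (z - eta) * poly Fp (z + of_nat n * eta))"
  by (simp add: Sp_def)

lemma deg_X: "degree (shp Q1P (-eta) * shp Fp c) = degree Ep"
  using SH(1)[of Q1P "-eta" Fp c] Ep_eq by simp

lemma lead_X: "lead_coeff (shp Q1P (-eta) * shp Fp c) = lead_coeff Ep"
  using SH(2)[of Q1P "-eta" Fp c] Ep_eq by simp

lemma coeff_X: "coeff (shp Q1P (-eta) * shp Fp c) N = coeff Ep N"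
proof -
  have d: "degree (shp Q1P (-eta) * shp Fp c) \<le> N" using deg_X deg_Ep by simp
  have "coeff (shp Q1P (-eta) * shp Fp c) N
      = (if degree (shp Q1P (-eta) * shp Fp c) = N then lead_coeff (shp Q1P (-eta) * shp Fp c) else 0)"
    by (rule coeff_le[OF d])
  also have "\<dots> = (if degree Ep = N then lead_coeff Ep else 0)" by (metis deg_X lead_X)
  also have "\<dots> = coeff Ep N" by (rule coeff_le[symmetric, OF deg_Ep])
  finally show ?thesis .
qed

lemma deg_Sp: "degree (Sp n) \<le> N"
  unfolding Sp_def using deg_X deg_Ep by (metis degree_smult_le order_trans)

lemma coeff_Sp: "coeff (Sp n) N = Tinf k1 k2 k3 (Suc (Suc n))"
  by (simp add: Sp_def coeff_X coeff_Ep Tinf_def)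

lemma D_nz: "a \<in> {1..N} \<Longrightarrow> (\<Prod>r=1..k. dN (xi a + of_nat r * eta)) \<noteq> 0"
  using d_shift_nz by simp

lemma cinv:
  assumes a: "a \<in> {1..N}"
  shows "(\<Prod>b=1..N. \<Prod>r=1..k. 1 / (xi a - xi b + of_nat r * eta))
        = 1 / (\<Prod>r=1..k. dN (xi a + of_nat r * eta))"
proof -
  have "(\<Prod>b=1..N. \<Prod>r=1..k. 1 / (xi a - xi b + of_nat r * eta))
      = (\<Prod>r=1..k. \<Prod>b=1..N. 1 / (xi a - xi b + of_nat r * eta))" by (rule prod.swap)
  also have "\<dots> = (\<Prod>r=1..k. 1 / dN (xi a + of_nat r * eta))"
  proof (rule prod.cong)
    fix r
    have "(\<Prod>b=1..N. 1 / (xi a - xi b + of_nat r * eta)) = 1 / (\<Prod>b=1..N. (xi a - xi b + of_nat r * eta))"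
      by (simp add: prod_dividef)
    also have "(\<Prod>b=1..N. (xi a - xi b + of_nat r * eta)) = dN (xi a + of_nat r * eta)"
      unfolding dfun_def by (rule prod.cong) (simp_all add: algebra_simps)
    finally show "(\<Prod>b=1..N. 1 / (xi a - xi b + of_nat r * eta)) = 1 / dN (xi a + of_nat r * eta)" .
  qed simp
  also have "\<dots> = 1 / (\<Prod>r=1..k. dN (xi a + of_nat r * eta))" by (simp add: prod_dividef)
  finally show ?thesis .
qed

lemma step:
  assumes H: "\<forall>a\<in>{1..N}. tt (Suc n) (xi a + eta) * x a
      = (\<Prod>r=1..Suc n. dN (xi a + of_nat r * eta)) * poly (Sp n) (xi a)"
  shows "tt (Suc (Suc n)) z = (\<Prod>r=1..Suc n. dN (z + of_nat r * eta)) * poly (Sp n) z"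
proof -
  have Lg: "poly (Sp n) z = coeff (Sp n) N * dN z + (\<Sum>a=1..N. fcoef eta xi N 1 a z * poly (Sp n) (xi a))"
    by (rule lagrange[OF inj_xi N deg_Sp])
  have sm: "fcoef eta xi N (Suc (Suc n)) a z * tt (Suc n) (xi a + eta) * x a
      = fcoef eta xi N 1 a z * poly (Sp n) (xi a)" if a: "a \<in> {1..N}" for a
  proof -
    let ?D = "\<Prod>r=1..Suc n. dN (xi a + of_nat r * eta)"
    have fc: "fcoef eta xi N (Suc (Suc n)) a z = fcoef eta xi N 1 a z * (1 / ?D)"
      using cinv[OF a, of "Suc n"] by (simp add: fcoef_def)
    have "fcoef eta xi N (Suc (Suc n)) a z * tt (Suc n) (xi a + eta) * x a
        = fcoef eta xi N 1 a z * (1 / ?D) * (tt (Suc n) (xi a + eta) * x a)"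
      by (simp add: fc)
    also have "\<dots> = fcoef eta xi N 1 a z * (1 / ?D) * (?D * poly (Sp n) (xi a))"
      using H a by simp
    also have "\<dots> = fcoef eta xi N 1 a z * poly (Sp n) (xi a)"
      using D_nz[OF a, of "Suc n"] by simp
    finally show ?thesis .
  qed
  have "tt (Suc (Suc n)) z = (\<Prod>r=1..Suc n. dN (z + of_nat r * eta)) *
      (Tinf k1 k2 k3 (Suc (Suc n)) * dN z +
       (\<Sum>a=1..N. fcoef eta xi N (Suc (Suc n)) a z * tt (Suc n) (xi a + eta) * x a))"
    by (simp only: tpol.simps)
  also have "(\<Sum>a=1..N. fcoef eta xi N (Suc (Suc n)) a z * tt (Suc n) (xi a + eta) * x a)
      = (\<Sum>a=1..N. fcoef eta xi N 1 a z * poly (Sp n) (xi a))"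
    by (rule sum.cong) (simp_all add: sm)
  also have "Tinf k1 k2 k3 (Suc (Suc n)) * dN z + (\<Sum>a=1..N. fcoef eta xi N 1 a z * poly (Sp n) (xi a))
      = poly (Sp n) z" using Lg coeff_Sp by simp
  finally show ?thesis .
qed

lemma CF: "tt (Suc (Suc n)) z = (\<Prod>r=1..Suc n. dN (z + of_nat r * eta)) * poly (Sp n) z"
proof (induction n arbitrary: z)
  case 0
  show ?case
  proof (rule step, intro ballI)
    fix a assume a: "a \<in> {1..N}"
    have E: "Q1 (xi a) * poly Fp (xi a) = k1 * tt (Suc 0) (xi a + eta)"
    proof -
      have "Q1 (xi a) * poly Fp (xi a) = poly Ep (xi a)" using Ep_eq by simp
      also have "\<dots> = k1 * tt (Suc 0) (xi a + eta)" unfolding poly_Ep using d_xi[OF a] by simp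
      finally show ?thesis .
    qed
    have "Q1 (xi a) * (tt (Suc 0) (xi a + eta) * x a)
        = tt (Suc 0) (xi a + eta) * (x a * Q1 (xi a))" by (simp add: ac_simps)
    also have "\<dots> = dN (xi a + eta) * Q1 (xi a - eta) * (k1 * tt (Suc 0) (xi a + eta))"
      using x_val[OF a] by (simp add: ac_simps)
    also have "\<dots> = Q1 (xi a) * (dN (xi a + eta) * (Q1 (xi a - eta) * poly Fp (xi a)))"
      unfolding E[symmetric] by (simp add: ac_simps)
    finally have "tt (Suc 0) (xi a + eta) * x a = dN (xi a + eta) * (Q1 (xi a - eta) * poly Fp (xi a))"
      using Q1_xi_nz[OF a] by simp
    thus "tt (Suc 0) (xi a + eta) * x a
        = (\<Prod>r=1..Suc 0. dN (xi a + of_nat r * eta)) * poly (Sp 0) (xi a)"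
      by (simp add: poly_Sp)
  qed
next
  case (Suc m)
  show ?case
  proof (rule step, intro ballI)
    fix a assume a: "a \<in> {1..N}"
    let ?P = "\<Prod>r=1..Suc m. dN (xi a + eta + of_nat r * eta)"
    have IH: "tt (Suc (Suc m)) (xi a + eta) = ?P * (k1 ^ m * (Q1 (xi a) * poly Fp (xi a + of_nat (Suc m) * eta)))"
    proof -
      have e1: "xi a + eta - eta = xi a" by simp
      have e2: "xi a + eta + of_nat m * eta = xi a + of_nat (Suc m) * eta" by (simp add: algebra_simps)
      show ?thesis using Suc.IH[of "xi a + eta"] by (simp only: poly_Sp e1 e2)
    qed
    have pr: "(\<Prod>r=1..Suc (Suc m). dN (xi a + of_nat r * eta)) = dN (xi a + eta) * ?P"
    proof -
      have "(\<Prod>r=1..Suc (Suc m). dN (xi a + of_nat r * eta))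
          = dN (xi a + of_nat 1 * eta) * (\<Prod>r=Suc 1..Suc (Suc m). dN (xi a + of_nat r * eta))"
        by (rule prod.atLeast_Suc_atMost) simp
      also have "(\<Prod>r=Suc 1..Suc (Suc m). dN (xi a + of_nat r * eta))
          = (\<Prod>r=1..Suc m. dN (xi a + of_nat (Suc r) * eta))"
        by (rule prod.shift_bounds_cl_Suc_ivl)
      also have "\<dots> = ?P" by (rule prod.cong) (simp_all add: algebra_simps)
      finally show ?thesis by simp
    qed
    have "tt (Suc (Suc m)) (xi a + eta) * x a
        = ?P * k1 ^ m * poly Fp (xi a + of_nat (Suc m) * eta) * (x a * Q1 (xi a))"
      unfolding IH by (simp add: ac_simps)
    also have "\<dots> = ?P * k1 ^ m * poly Fp (xi a + of_nat (Suc m) * eta) * (k1 * dN (xi a + eta) * Q1 (xi a - eta))"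
      using x_val[OF a] by simp
    also have "\<dots> = (\<Prod>r=1..Suc (Suc m). dN (xi a + of_nat r * eta)) * poly (Sp (Suc m)) (xi a)"
      unfolding pr poly_Sp by (simp add: ac_simps)
    finally show "tt (Suc (Suc m)) (xi a + eta) * x a
        = (\<Prod>r=1..Suc (Suc m). dN (xi a + of_nat r * eta)) * poly (Sp (Suc m)) (xi a)" .
  qed
qed

end



context BA
begin

lemma tZ_nat: "tZ eta xi N k1 k2 k3 x (int k) w = tt k w"
  by (simp add: tZ_def del: tpol.simps)

lemma out_zero: "tfused eta xi N k1 k2 k3 x (2 + n) (3 + m) z = 0"
proof -
  define A where "A = mat (2+n) (2+n) (\<lambda>(i,j). tZ eta xi N k1 k2 k3 x (int (3+m) + int i - int j) (z - of_nat i * eta))"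
  define al where "al = poly Fp (z + of_nat m * eta)"
  define be where "be = k1 * dN (z + of_nat (Suc (Suc m)) * eta) * poly Fp (z + of_nat (Suc m) * eta)"
  have c1: "A $$ (i,1) = (\<Prod>r=1..Suc (m+i). dN (z - of_nat i * eta + of_nat r * eta))
      * (k1 ^ (m+i) * (Q1 (z - of_nat i * eta - eta) * al))" if i: "i < 2+n" for i
  proof -
    have "A $$ (i,1) = tZ eta xi N k1 k2 k3 x (int (3+m) + int i - int 1) (z - of_nat i * eta)"
      unfolding A_def using i by (subst index_mat) auto
    also have "int (3+m) + int i - int 1 = int (Suc (Suc (m+i)))" by simp
    also have "tZ eta xi N k1 k2 k3 x (int (Suc (Suc (m+i)))) (z - of_nat i * eta) = tt (Suc (Suc (m+i))) (z - of_nat i * eta)"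
      by (rule tZ_nat)
    also have "\<dots> = (\<Prod>r=1..Suc (m+i). dN (z - of_nat i * eta + of_nat r * eta))
      * (k1 ^ (m+i) * (Q1 (z - of_nat i * eta - eta) * poly Fp (z - of_nat i * eta + of_nat (m+i) * eta)))"
      by (simp only: CF poly_Sp)
    also have "z - of_nat i * eta + of_nat (m+i) * eta = z + of_nat m * eta" by (simp add: algebra_simps)
    finally show ?thesis by (simp add: al_def)
  qed
  have c0: "A $$ (i,0) = (\<Prod>r=1..Suc (m+i). dN (z - of_nat i * eta + of_nat r * eta))
      * dN (z + of_nat (Suc (Suc m)) * eta)
      * (k1 ^ Suc (m+i) * (Q1 (z - of_nat i * eta - eta) * poly Fp (z + of_nat (Suc m) * eta)))"
    if i: "i < 2+n" for i
  proof -
    have "A $$ (i,0) = tZ eta xi N k1 k2 k3 x (int (3+m) + int i - int 0) (z - of_nat i * eta)"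
      unfolding A_def using i by (subst index_mat) auto
    also have "int (3+m) + int i - int 0 = int (Suc (Suc (Suc (m+i))))" by simp
    also have "tZ eta xi N k1 k2 k3 x (int (Suc (Suc (Suc (m+i))))) (z - of_nat i * eta) = tt (Suc (Suc (Suc (m+i)))) (z - of_nat i * eta)"
      by (rule tZ_nat)
    also have "\<dots> = (\<Prod>r=1..Suc (Suc (m+i)). dN (z - of_nat i * eta + of_nat r * eta))
      * (k1 ^ Suc (m+i) * (Q1 (z - of_nat i * eta - eta) * poly Fp (z - of_nat i * eta + of_nat (Suc (m+i)) * eta)))"
      by (simp only: CF poly_Sp)
    also have "(\<Prod>r=1..Suc (Suc (m+i)). dN (z - of_nat i * eta + of_nat r * eta))
       = (\<Prod>r=1..Suc (m+i). dN (z - of_nat i * eta + of_nat r * eta)) * dN (z - of_nat i * eta + of_nat (Suc (Suc (m+i))) * eta)"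
      by simp
    also have "z - of_nat i * eta + of_nat (Suc (Suc (m+i))) * eta = z + of_nat (Suc (Suc m)) * eta"
      by (simp add: algebra_simps)
    also have "z - of_nat i * eta + of_nat (Suc (m+i)) * eta = z + of_nat (Suc m) * eta"
      by (simp add: algebra_simps)
    finally show ?thesis .
  qed
  have dep: "\<forall>i<2+n. A $$ (i,0) * al = A $$ (i,1) * be"
  proof (intro allI impI)
    fix i assume i: "i < 2+n"
    show "A $$ (i,0) * al = A $$ (i,1) * be"
      unfolding c0[OF i] c1[OF i] be_def by (simp add: ac_simps)
  qed
  have zz: "al = 0 \<longrightarrow> (\<forall>i<2+n. A $$ (i,1) = 0)"
    using c1 by simp
  have "det A = 0"
    by (rule det_cols_dep[OF _ _ dep zz]) (simp_all add: A_def)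
  thus ?thesis by (simp add: tfused_def A_def)
qed

lemma tf22: "tfused eta xi N k1 k2 k3 x 2 2 w = tt 2 w * tt 2 (w - eta) - tt 1 w * tt 3 (w - eta)"
  by (simp add: tfused_def det22 tZ_def)

lemma inner: "k2 * k3 * dN z * tt 3 z = k1 * (tt 2 z * tt 2 (z + eta) - tt 3 z * tt 1 (z + eta))"
proof -
  have h3: "tt 3 z = dN (z + eta) * dN (z + 2 * eta) * (k1 * (Q1 (z - eta) * poly Fp (z + eta)))"
  proof -
    have "tt 3 z = tt (Suc (Suc (Suc 0))) z" by (simp add: numeral_3_eq_3)
    also have "\<dots> = (\<Prod>r=1..Suc (Suc 0). dN (z + of_nat r * eta)) * poly (Sp (Suc 0)) z" by (rule CF)
    finally show ?thesis by (simp add: poly_Sp)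
  qed
  have h2: "tt 2 z = dN (z + eta) * (Q1 (z - eta) * poly Fp z)"
  proof -
    have "tt 2 z = tt (Suc (Suc 0)) z" by (simp add: numeral_2_eq_2)
    also have "\<dots> = (\<Prod>r=1..Suc 0. dN (z + of_nat r * eta)) * poly (Sp 0) z" by (rule CF)
    finally show ?thesis by (simp add: poly_Sp)
  qed
  have h2': "tt 2 (z + eta) = dN (z + 2 * eta) * (Q1 z * poly Fp (z + eta))"
  proof -
    have "tt 2 (z + eta) = tt (Suc (Suc 0)) (z + eta)" by (simp add: numeral_2_eq_2)
    also have "\<dots> = (\<Prod>r=1..Suc 0. dN (z + eta + of_nat r * eta)) * poly (Sp 0) (z + eta)" by (rule CF)
    also have "(\<Prod>r=1..Suc 0. dN (z + eta + of_nat r * eta)) = dN (z + 2 * eta)"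
    proof -
      have "z + eta + of_nat 1 * eta = z + 2 * eta" by simp
      thus ?thesis by (simp add: add.commute)
    qed
    finally show ?thesis by (simp add: poly_Sp)
  qed
  have h1: "k1 * tt 1 (z + eta) = Q1 z * poly Fp z - k2 * k3 * dN z"
  proof -
    have "Q1 z * poly Fp z = poly Ep z" using Ep_eq by simp
    also have "\<dots> = k1 * tt 1 (z + eta) + k2 * k3 * dN z" by (simp add: poly_Ep)
    finally show ?thesis by simp
  qed
  have "k1 * (tt 2 z * tt 2 (z + eta) - tt 3 z * tt 1 (z + eta))
      = k1 * tt 2 z * tt 2 (z + eta) - tt 3 z * (k1 * tt 1 (z + eta))"
    by (simp add: algebra_simps)
  also have "\<dots> = k2 * k3 * dN z * tt 3 z"
    unfolding h1 h2 h2' h3 by (simp add: algebra_simps)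
  finally show ?thesis by simp
qed

end



theorem lemmaA2:
  fixes eta k1 k2 k3 :: complex and N L M :: nat and xi lam mu :: "nat \<Rightarrow> complex"
  assumes eta: "eta \<noteq> 0" and N: "N \<ge> 1"
    and xi: "\<And>a b. a \<in> {1..N} \<Longrightarrow> b \<in> {1..N} \<Longrightarrow> a \<noteq> b \<Longrightarrow> \<forall>k::int. xi a - xi b \<noteq> of_int k * eta"
    and k: "k1 \<noteq> 0" "k2 \<noteq> 0" "k3 \<noteq> 0"
    and BE1: "\<And>j. j \<in> {1..L} \<Longrightarrow>
       k1 * Qpol mu M (lam j) * afun eta xi N (lam j) = k2 * dfun xi N (lam j) * Qpol mu M (lam j + eta)"
    and BE2: "\<And>j. j \<in> {1..M} \<Longrightarrow>
       k2 * Qpol mu M (mu j + eta) * Qpol lam L (mu j - eta) = - k3 * Qpol mu M (mu j - eta) * Qpol lam L (mu j)"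
    and dl: "\<And>l m. l \<in> {1..L} \<Longrightarrow> m \<in> {1..L} \<Longrightarrow> l \<noteq> m \<Longrightarrow> lam l \<noteq> lam m"
    and dm: "\<And>p q. p \<in> {1..M} \<Longrightarrow> q \<in> {1..M} \<Longrightarrow> p \<noteq> q \<Longrightarrow> mu p \<noteq> mu q"
    and dlm: "\<And>q m. q \<in> {1..M} \<Longrightarrow> m \<in> {1..L} \<Longrightarrow> mu q \<noteq> lam m"
    and dmx: "\<And>h n. h \<in> {1..M} \<Longrightarrow> n \<in> {1..N} \<Longrightarrow> mu h \<noteq> xi n"
  defines "x \<equiv> (\<lambda>a. tBethe eta xi N k1 k2 k3 lam L mu M (xi a))"
  shows "(\<forall>z n m. tfused eta xi N k1 k2 k3 x (2 + n) (3 + m) z = 0)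
       \<and> (\<forall>z. k2 * k3 * dfun xi N z * tpol eta xi N k1 k2 k3 x 3 z
               = k1 * tfused eta xi N k1 k2 k3 x 2 2 (z + eta))
       \<and> (\<forall>z. k2 * k3 * dfun xi N z * tpol eta xi N k1 k2 k3 x 3 z
               = k1 * (tpol eta xi N k1 k2 k3 x 2 z * tpol eta xi N k1 k2 k3 x 2 (z + eta)
                       - tpol eta xi N k1 k2 k3 x 3 z * tpol eta xi N k1 k2 k3 x 1 (z + eta)))"
proof -
  have loc: "BA eta k1 k2 k3 N L M xi lam mu x"
    unfolding BA_def using eta N xi k BE1 BE2 dl dm dlm dmx by (simp add: x_def)
  interpret BA eta k1 k2 k3 N L M xi lam mu x by (rule loc)
  show ?thesis
  proof (intro conjI allI)
    fix z n m show "tfused eta xi N k1 k2 k3 x (2 + n) (3 + m) z = 0" by (rule out_zero)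
  next
    fix z
    show "k2 * k3 * dfun xi N z * tpol eta xi N k1 k2 k3 x 3 z = k1 * tfused eta xi N k1 k2 k3 x 2 2 (z + eta)"
    proof -
      have ze: "z + eta - eta = z" by simp
      have e: "tfused eta xi N k1 k2 k3 x 2 2 (z + eta) = tt 2 (z + eta) * tt 2 z - tt 1 (z + eta) * tt 3 z"
        using tf22[of "z + eta"] unfolding ze .
      show ?thesis unfolding e using inner[of z] by (metis mult.commute)
    qed
  next
    fix z
    show "k2 * k3 * dfun xi N z * tpol eta xi N k1 k2 k3 x 3 z
       = k1 * (tpol eta xi N k1 k2 k3 x 2 z * tpol eta xi N k1 k2 k3 x 2 (z + eta)
               - tpol eta xi N k1 k2 k3 x 3 z * tpol eta xi N k1 k2 k3 x 1 (z + eta))"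
      by (rule inner)
  qed
qed

end
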